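(* For every integer $m\geq 2$ and every integer $n\geq 3$, the graph $mTL_n$ (the disjoint union of $m$ copies of the triangular ladder $TL_n$) is $C_3$-supermagic.
   Context: All graphs are finite and simple. For a graph $H$, a graph $G=(V,E)$ has an $H$-covering if every edge of $G$ belongs to a subgraph of $G$ isomorphic to $H$. For such $G$, an $H$-magic labeling is a bijection $\lambda: V\cup E\to\{1,2,\dots,|V|+|E|\}$ for which there is a constant $c$ such that for every subgraph $H'=(V',E')$ of $G$ isomorphic to $H$, $\sum_{v\in V'}\lambda(v)+\sum_{e\in E'}\lambda(e)=c$. It is $H$-supermagic if moreover $\{\lambda(v):v\in V\}=\{1,\dots,|V|\}$; $G$ is $H$-supermagic if it admits such a labeling. $C_k$ is the cycle of length $k$. $mG$ denotes the disjoint union of $m$ copies of $G$. The triangular ladder $TL_n$ has vertices $u_i,v_i$ ($1\le i\le n$) and edges $u_iv_i$ ($1\le i\le n$), and $u_iu_{i+1}$, $v_iv_{i+1}$, $u_{i+1}v_i$ ($1\le i\le n-1$). *)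

theory Defs
  imports Main
begin

type_synonym 'a graph = "'a set \<times> 'a set set"

definition simple_graph :: "'a graph \<Rightarrow> bool" where
  "simple_graph G \<longleftrightarrow> finite (fst G) \<and>
     (\<forall>e\<in>snd G. \<exists>u v. e = {u, v} \<and> u \<noteq> v \<and> u \<in> fst G \<and> v \<in> fst G)"

definition subgraph :: "'a graph \<Rightarrow> 'a graph \<Rightarrow> bool" where
  "subgraph H G \<longleftrightarrow> fst H \<subseteq> fst G \<and> snd H \<subseteq> snd G \<and> (\<forall>e\<in>snd H. e \<subseteq> fst H)"

definition graph_iso :: "'a graph \<Rightarrow> 'b graph \<Rightarrow> bool" where
  "graph_iso G H \<longleftrightarrow> (\<exists>f. bij_betw f (fst G) (fst H) \<and>
     (\<forall>u\<in>fst G. \<forall>v\<in>fst G. {u, v} \<in> snd G \<longleftrightarrow> {f u, f v} \<in> snd H))"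

definition H_covering :: "'b graph \<Rightarrow> 'a graph \<Rightarrow> bool" where
  "H_covering H G \<longleftrightarrow> (\<forall>e\<in>snd G. \<exists>G'. subgraph G' G \<and> graph_iso G' H \<and> e \<in> snd G')"

text \<open>Total labeling: vertices are tagged Inl, edges Inr.\<close>
definition H_magic_labeling :: "'b graph \<Rightarrow> 'a graph \<Rightarrow> ('a + 'a set \<Rightarrow> nat) \<Rightarrow> bool" where
  "H_magic_labeling H G lam \<longleftrightarrow>
     bij_betw lam (Inl ` fst G \<union> Inr ` snd G) {1..card (fst G) + card (snd G)} \<and>
     (\<exists>c. \<forall>G'. subgraph G' G \<and> graph_iso G' H \<longrightarrow>
        (\<Sum>v\<in>fst G'. lam (Inl v)) + (\<Sum>e\<in>snd G'. lam (Inr e)) = c)"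

definition H_supermagic_labeling :: "'b graph \<Rightarrow> 'a graph \<Rightarrow> ('a + 'a set \<Rightarrow> nat) \<Rightarrow> bool" where
  "H_supermagic_labeling H G lam \<longleftrightarrow>
     H_magic_labeling H G lam \<and> lam ` Inl ` fst G = {1..card (fst G)}"

definition H_supermagic :: "'b graph \<Rightarrow> 'a graph \<Rightarrow> bool" where
  "H_supermagic H G \<longleftrightarrow> H_covering H G \<and> (\<exists>lam. H_supermagic_labeling H G lam)"

definition cycle_graph :: "nat \<Rightarrow> nat graph" where
  "cycle_graph k = ({0..<k}, {{i, (i + 1) mod k} | i. i < k})"

text \<open>Triangular ladder TL_n: u_i = (False, i), v_i = (True, i), 1 \<le> i \<le> n.\<close>
definition triangular_ladder :: "nat \<Rightarrow> (bool \<times> nat) graph" where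
  "triangular_ladder n =
    ({(b, i). i \<in> {1..n}},
     {{(False, i), (True, i)} | i. 1 \<le> i \<and> i \<le> n} \<union>
     {{(False, i), (False, i + 1)} | i. 1 \<le> i \<and> i \<le> n - 1} \<union>
     {{(True, i), (True, i + 1)} | i. 1 \<le> i \<and> i \<le> n - 1} \<union>
     {{(False, i + 1), (True, i)} | i. 1 \<le> i \<and> i \<le> n - 1})"

definition copies :: "nat \<Rightarrow> 'a graph \<Rightarrow> (nat \<times> 'a) graph" where
  "copies m G = ({(j, x). j < m \<and> x \<in> fst G},
                  {(\<lambda>x. (j, x)) ` e | j e. j < m \<and> e \<in> snd G})"

end

theory Submission
  imports Defs
begin


definition w :: "nat \<Rightarrow> bool \<times> nat" where "w p = (odd p, p div 2 + 1)"
definition pos :: "bool \<times> nat \<Rightarrow> nat" where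
  "pos v = 2 * (snd v - 1) + (if fst v then 1 else 0)"

lemma pos_w[simp]: "pos (w p) = p"
  unfolding w_def pos_def by (cases "odd p") (auto elim: oddE)

lemma w_eq_iff[simp]: "w p = w q \<longleftrightarrow> p = q"
  by (metis pos_w)

lemma w_pos: "snd v \<ge> 1 \<Longrightarrow> w (pos v) = v"
  unfolding w_def pos_def by (cases v) auto

lemma TL_verts: "fst (triangular_ladder n) = w ` {..<2*n}"
proof -
  have "{(b, i). i \<in> {1..n}} = w ` {..<2*n}"
  proof
    show "{(b, i). i \<in> {1..n}} \<subseteq> w ` {..<2*n}"
    proof
      fix v :: "bool \<times> nat" assume "v \<in> {(b, i). i \<in> {1..n}}"
      then have "snd v \<ge> 1" "snd v \<le> n" by auto
      then have "w (pos v) = v" "pos v < 2*n" using w_pos[of v] by (auto simp: pos_def)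
      then show "v \<in> w ` {..<2*n}" by (metis image_eqI lessThan_iff)
    qed
    show "w ` {..<2*n} \<subseteq> {(b, i). i \<in> {1..n}}"
      by (auto simp: w_def)
  qed
  then show ?thesis by (simp add: triangular_ladder_def)
qed

lemma w_even[simp]: "w (2*t) = (False, t+1)" by (simp add: w_def)
lemma w_odd[simp]: "w (2*t+1) = (True, t+1)" by (simp add: w_def)
lemma w_Suc1[simp]: "w (Suc (2*t)) = (True, Suc t)" by (simp add: w_def)
lemma w_Suc2[simp]: "w (Suc (Suc (2*t))) = (False, Suc (Suc t))" by (simp add: w_def)
lemma w_Suc3[simp]: "w (Suc (Suc (Suc (2*t)))) = (True, Suc (Suc t))" by (simp add: w_def)

lemma TL_edges: "snd (triangular_ladder n) =
   {{w p, w (p+1)} | p. p+1 < 2*n} \<union> {{w p, w (p+2)} | p. p+2 < 2*n}"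
proof
  show "snd (triangular_ladder n) \<subseteq> {{w p, w (p+1)} | p. p+1 < 2*n} \<union> {{w p, w (p+2)} | p. p+2 < 2*n}"
  proof
    fix e assume "e \<in> snd (triangular_ladder n)"
    then consider (a) i where "e = {(False, i), (True, i)}" "1 \<le> i" "i \<le> n"
      | (b) i where "e = {(False, i), (False, i+1)}" "1 \<le> i" "i \<le> n - 1"
      | (c) i where "e = {(True, i), (True, i+1)}" "1 \<le> i" "i \<le> n - 1"
      | (d) i where "e = {(False, i+1), (True, i)}" "1 \<le> i" "i \<le> n - 1"
      unfolding triangular_ladder_def snd_conv Un_iff mem_Collect_eq by blast
    then show "e \<in> {{w p, w (p+1)} | p. p+1 < 2*n} \<union> {{w p, w (p+2)} | p. p+2 < 2*n}"
    proof cases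
      case a
      then obtain t where t: "i = t+1" by (metis le_add_diff_inverse2)
      have "e = {w (2*t), w (2*t+1)}" using a t by simp
      moreover have "2*t+1 < 2*n" using a t by simp
      ultimately show ?thesis by blast
    next
      case b
      then obtain t where t: "i = t+1" by (metis le_add_diff_inverse2)
      have "e = {w (2*t), w (2*t+2)}" using b t by simp
      moreover have "2*t+2 < 2*n" using b t by simp
      ultimately show ?thesis by blast
    next
      case c
      then obtain t where t: "i = t+1" by (metis le_add_diff_inverse2)
      have "e = {w (2*t+1), w (2*t+1+2)}" using c t by simp
      moreover have "2*t+1+2 < 2*n" using c t by simp
      ultimately show ?thesis by blast
    next
      case d
      then obtain t where t: "i = t+1" by (metis le_add_diff_inverse2)
      have "e = {w (2*t+1), w (2*t+1+1)}" using d t by (simp add: insert_commute)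
      moreover have "2*t+1+1 < 2*n" using d t by simp
      ultimately show ?thesis by blast
    qed
  qed
next
  show "{{w p, w (p+1)} | p. p+1 < 2*n} \<union> {{w p, w (p+2)} | p. p+2 < 2*n} \<subseteq> snd (triangular_ladder n)"
  proof
    fix e assume "e \<in> {{w p, w (p+1)} | p. p+1 < 2*n} \<union> {{w p, w (p+2)} | p. p+2 < 2*n}"
    then consider (a) p where "e = {w p, w (p+1)}" "p+1 < 2*n"
      | (b) p where "e = {w p, w (p+2)}" "p+2 < 2*n" by blast
    then show "e \<in> snd (triangular_ladder n)"
    proof cases
      case a
      show ?thesis
      proof (cases "even p")
        case True
        then obtain t where t: "p = 2*t" by (auto elim: evenE)
        have "e = {(False, t+1), (True, t+1)}" using a t by simp
        moreover have "t+1 \<le> n" using a t by simp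
        ultimately have "e \<in> {{(False, i), (True, i)} |i. 1 \<le> i \<and> i \<le> n}"
          unfolding mem_Collect_eq by (intro exI[of _ "t+1"]) simp
        then show ?thesis unfolding triangular_ladder_def snd_conv Un_iff by blast
      next
        case False
        then obtain t where t: "p = 2*t+1" by (auto elim: oddE)
        have "e = {(False, (t+1)+1), (True, t+1)}" using a t by (simp add: insert_commute)
        moreover have "t+1 \<le> n - 1" using a t by simp
        ultimately have "e \<in> {{(False, i + 1), (True, i)} |i. 1 \<le> i \<and> i \<le> n - 1}"
          unfolding mem_Collect_eq by (intro exI[of _ "t+1"]) simp
        then show ?thesis unfolding triangular_ladder_def snd_conv Un_iff by blast
      qed
    next
      case b
      show ?thesis
      proof (cases "even p")
        case True
        then obtain t where t: "p = 2*t" by (auto elim: evenE)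
        have "e = {(False, t+1), (False, (t+1)+1)}" using b t by simp
        moreover have "t+1 \<le> n - 1" using b t by simp
        ultimately have "e \<in> {{(False, i), (False, i + 1)} |i. 1 \<le> i \<and> i \<le> n - 1}"
          unfolding mem_Collect_eq by (intro exI[of _ "t+1"]) simp
        then show ?thesis unfolding triangular_ladder_def snd_conv Un_iff by blast
      next
        case False
        then obtain t where t: "p = 2*t+1" by (auto elim: oddE)
        have "e = {(True, t+1), (True, (t+1)+1)}" using b t by simp
        moreover have "t+1 \<le> n - 1" using b t by simp
        ultimately have "e \<in> {{(True, i), (True, i + 1)} |i. 1 \<le> i \<and> i \<le> n - 1}"
          unfolding mem_Collect_eq by (intro exI[of _ "t+1"]) simp
        then show ?thesis unfolding triangular_ladder_def snd_conv Un_iff by blast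
      qed
    qed
  qed
qed



lemma base_bij: "bij_betw (\<lambda>(j,p). m*p+j) ({..<m} \<times> {..<K}) {..<m*(K::nat)}"
proof (rule bij_betw_imageI)
  show "inj_on (\<lambda>(j,p). m*p+j) ({..<m} \<times> {..<K})"
  proof (rule inj_onI, clarsimp)
    fix j p j' p' assume h: "j < m" "j' < m" "m*p+j = m*p'+j'"
    have "(m*p+j) div m = p" "(m*p'+j') div m = p'" using h(1,2) by simp_all
    moreover have "(m*p+j) mod m = j" "(m*p'+j') mod m = j'" using h(1,2) by simp_all
    ultimately show "j = j' \<and> p = p'" using h(3) by metis
  qed
  show "(\<lambda>(j,p). m*p+j) ` ({..<m} \<times> {..<K}) = {..<m*K}"
  proof
    show "(\<lambda>(j,p). m*p+j) ` ({..<m} \<times> {..<K}) \<subseteq> {..<m*K}"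
    proof clarsimp
      fix j p assume "j < m" "p < K"
      then have "m*p + j < m*(p+1)" by simp
      also have "\<dots> \<le> m*K" using \<open>p<K\<close> by (intro mult_le_mono2) simp
      finally show "m*p+j < m*K" .
    qed
    show "{..<m*K} \<subseteq> (\<lambda>(j,p). m*p+j) ` ({..<m} \<times> {..<K})"
    proof
      fix x assume x: "x \<in> {..<m*K}"
      then have m: "m > 0" by (cases m) auto
      have "x = m*(x div m) + x mod m" by simp
      moreover have "x mod m < m" using m by simp
      moreover have "x div m < K" using x m by (simp add: less_mult_imp_div_less mult.commute)
      ultimately show "x \<in> (\<lambda>(j,p). m*p+j) ` ({..<m} \<times> {..<K})"
        by (intro image_eqI[of _ _ "(x mod m, x div m)"]) auto
    qed
  qed
qed

lemma shift_bij: "bij_betw (\<lambda>(j,p). 1 + (m*p+j)) ({..<m} \<times> {..<K}) {1..m*(K::nat)}"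
proof -
  have "bij_betw (\<lambda>x. 1 + x) {..<m*K} {1..m*K}"
  proof (rule bij_betw_imageI)
    show "inj_on (\<lambda>x. 1 + x) {..<m*K}" by (rule inj_onI) auto
    show "(\<lambda>x. 1 + x) ` {..<m*K} = {1..m*K}"
    proof
      show "(\<lambda>x. 1 + x) ` {..<m*K} \<subseteq> {1..m*K}" by auto
      show "{1..m*K} \<subseteq> (\<lambda>x. 1 + x) ` {..<m*K}"
      proof
        fix y assume "y \<in> {1..m*K}"
        then show "y \<in> (\<lambda>x. 1 + x) ` {..<m*K}"
          by (intro image_eqI[of _ _ "y - 1"]) auto
      qed
    qed
  qed
  from bij_betw_trans[OF base_bij this] show ?thesis by (simp add: comp_def case_prod_unfold)
qed

lemma rev_bij: "bij_betw (\<lambda>(j,p). c + m*K - (m*p+j)) ({..<m} \<times> {..<K}) {c+1..c+m*(K::nat)}"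
proof -
  have "bij_betw (\<lambda>x. c + m*K - x) {..<m*K} {c+1..c+m*K}"
  proof (rule bij_betw_imageI)
    show "inj_on (\<lambda>x. c + m*K - x) {..<m*K}" by (rule inj_onI) auto
    show "(\<lambda>x. c + m*K - x) ` {..<m*K} = {c+1..c+m*K}"
    proof
      show "(\<lambda>x. c + m*K - x) ` {..<m*K} \<subseteq> {c+1..c+m*K}" by auto
      show "{c+1..c+m*K} \<subseteq> (\<lambda>x. c + m*K - x) ` {..<m*K}"
      proof
        fix y assume "y \<in> {c+1..c+m*K}"
        then show "y \<in> (\<lambda>x. c + m*K - x) ` {..<m*K}"
          by (intro image_eqI[of _ _ "c + m*K - y"]) auto
      qed
    qed
  qed
  from bij_betw_trans[OF base_bij this] show ?thesis by (simp add: comp_def case_prod_unfold)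
qed

lemma bij_betw_comp_image:
  assumes "bij_betw (f \<circ> g) A C" shows "bij_betw f (g ` A) C"
proof (rule bij_betw_imageI)
  show "inj_on f (g ` A)"
  proof (rule inj_onI)
    fix x y assume "x \<in> g ` A" "y \<in> g ` A" "f x = f y"
    then obtain a b where "a \<in> A" "b \<in> A" "x = g a" "y = g b" by auto
    with \<open>f x = f y\<close> assms have "a = b" unfolding bij_betw_def inj_on_def by auto
    then show "x = y" using \<open>x = g a\<close> \<open>y = g b\<close> by simp
  qed
  show "f ` g ` A = C" using assms unfolding bij_betw_def by (simp add: image_comp)
qed



definition Vs :: "nat \<Rightarrow> nat \<Rightarrow> (nat \<times> (bool \<times> nat)) set" where
  "Vs m N = (\<lambda>(j,p). (j, w p)) ` ({..<m} \<times> {..<N})"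
definition EA :: "nat \<Rightarrow> nat \<Rightarrow> (nat \<times> (bool \<times> nat)) set set" where
  "EA m N = (\<lambda>(j,p). {(j, w p), (j, w (Suc p))}) ` ({..<m} \<times> {..<N-1})"
definition EB :: "nat \<Rightarrow> nat \<Rightarrow> (nat \<times> (bool \<times> nat)) set set" where
  "EB m N = (\<lambda>(j,p). {(j, w p), (j, w (Suc (Suc p)))}) ` ({..<m} \<times> {..<N-2})"

lemma copies_V: "fst (copies m (triangular_ladder n)) = Vs m (2*n)"
  unfolding copies_def TL_verts Vs_def by auto

lemma copies_E: "snd (copies m (triangular_ladder n)) = EA m (2*n) \<union> EB m (2*n)"
proof
  show "snd (copies m (triangular_ladder n)) \<subseteq> EA m (2*n) \<union> EB m (2*n)"
  proof
    fix e assume "e \<in> snd (copies m (triangular_ladder n))"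
    then obtain j e0 where e: "e = (\<lambda>x. (j, x)) ` e0" "j < m" "e0 \<in> snd (triangular_ladder n)"
      unfolding copies_def by auto
    from e(3) consider (a) p where "e0 = {w p, w (p+1)}" "p+1 < 2*n"
      | (b) p where "e0 = {w p, w (p+2)}" "p+2 < 2*n" unfolding TL_edges by blast
    then show "e \<in> EA m (2*n) \<union> EB m (2*n)"
    proof cases
      case a
      then have "e = (\<lambda>(j,p). {(j, w p), (j, w (Suc p))}) (j, p)" "(j,p) \<in> {..<m} \<times> {..<2*n-1}"
        using e by auto
      then show ?thesis unfolding EA_def by blast
    next
      case b
      then have "e = (\<lambda>(j,p). {(j, w p), (j, w (Suc (Suc p)))}) (j, p)" "(j,p) \<in> {..<m} \<times> {..<2*n-2}"
        using e by auto
      then show ?thesis unfolding EB_def by blast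
    qed
  qed
  show "EA m (2*n) \<union> EB m (2*n) \<subseteq> snd (copies m (triangular_ladder n))"
  proof
    fix e assume "e \<in> EA m (2*n) \<union> EB m (2*n)"
    then consider (a) j p where "e = {(j, w p), (j, w (Suc p))}" "j < m" "p < 2*n-1"
      | (b) j p where "e = {(j, w p), (j, w (Suc (Suc p)))}" "j < m" "p < 2*n-2"
      unfolding EA_def EB_def by auto
    then show "e \<in> snd (copies m (triangular_ladder n))"
    proof cases
      case a
      then have "{w p, w (p+1)} \<in> snd (triangular_ladder n)" unfolding TL_edges by auto
      moreover have "e = (\<lambda>x. (j, x)) ` {w p, w (p+1)}" using a by simp
      ultimately show ?thesis unfolding copies_def using a by auto
    next
      case b
      then have "{w p, w (p+2)} \<in> snd (triangular_ladder n)" unfolding TL_edges by auto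
      moreover have "e = (\<lambda>x. (j, x)) ` {w p, w (p+2)}" using b by simp
      ultimately show ?thesis unfolding copies_def using b by auto
    qed
  qed
qed

definition Elab :: "nat \<Rightarrow> nat \<Rightarrow> nat \<Rightarrow> nat \<Rightarrow> nat" where
  "Elab m N j s = (if odd s then m*N + m*(N-1) - (m*(s div 2)+j)
                   else m*N + m*(N-1) + m*(N-2) - (m*(s div 2 - 1)+j))"

definition lab :: "nat \<Rightarrow> nat \<Rightarrow> (nat \<times> (bool \<times> nat)) + (nat \<times> (bool \<times> nat)) set \<Rightarrow> nat" where
  "lab m N z = (case z of Inl v \<Rightarrow> 1 + (m * pos (snd v) + fst v)
               | Inr e \<Rightarrow> Elab m N ((\<Sum>x\<in>e. fst x) div 2) (\<Sum>x\<in>e. pos (snd x)))"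

lemma lab_vert[simp]: "lab m N (Inl (j, w p)) = 1 + (m*p + j)"
  by (simp add: lab_def)

lemma lab_edge: "p \<noteq> q \<Longrightarrow> lab m N (Inr {(j, w p), (j, w q)}) = Elab m N j (p+q)"
  by (simp add: lab_def)

lemma Elab_a: "Elab m N j (p + Suc p) = m*N + m*(N-1) - (m*p+j)"
proof -
  have "p + Suc p = Suc (2*p)" by simp
  then show ?thesis by (simp add: Elab_def)
qed

lemma Elab_b: "Elab m N j (p + Suc (Suc p)) = m*N + m*(N-1) + m*(N-2) - (m*p+j)"
proof -
  have "p + Suc (Suc p) = 2*(p+1)" by simp
  then show ?thesis by (simp add: Elab_def)
qed

lemma lab_EA: "lab m N (Inr {(j, w p), (j, w (Suc p))}) = m*N + m*(N-1) - (m*p+j)"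
proof -
  have "lab m N (Inr {(j, w p), (j, w (Suc p))}) = Elab m N j (p + Suc p)" by (rule lab_edge) simp
  also have "\<dots> = m*N + m*(N-1) - (m*p+j)" by (rule Elab_a)
  finally show ?thesis .
qed

lemma lab_EB: "lab m N (Inr {(j, w p), (j, w (Suc (Suc p)))}) = m*N + m*(N-1) + m*(N-2) - (m*p+j)"
proof -
  have "lab m N (Inr {(j, w p), (j, w (Suc (Suc p)))}) = Elab m N j (p + Suc (Suc p))" by (rule lab_edge) simp
  also have "\<dots> = m*N + m*(N-1) + m*(N-2) - (m*p+j)" by (rule Elab_b)
  finally show ?thesis .
qed

lemma bij_V: "bij_betw (lab m N) (Inl ` Vs m N) {1..m*N}"
proof -
  have 1: "Inl ` Vs m N = (\<lambda>(j,p). Inl (j, w p)) ` ({..<m} \<times> {..<N})"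
    unfolding Vs_def by (auto simp: image_iff)
  have 2: "bij_betw (lab m N \<circ> (\<lambda>(j,p). Inl (j, w p))) ({..<m} \<times> {..<N}) {1..m*N}"
    using shift_bij[of m N] by (rule bij_betw_cong[THEN iffD1, rotated]) auto
  show ?thesis unfolding 1 by (rule bij_betw_comp_image[OF 2])
qed

lemma bij_EA: "bij_betw (lab m N) (Inr ` EA m N) {m*N+1..m*N+m*(N-1)}"
proof -
  have 1: "Inr ` EA m N = (Inr \<circ> (\<lambda>(j,p). {(j, w p), (j, w (Suc p))})) ` ({..<m} \<times> {..<N-1})"
    unfolding EA_def image_comp ..
  have 2: "bij_betw (lab m N \<circ> (Inr \<circ> (\<lambda>(j,p). {(j, w p), (j, w (Suc p))}))) ({..<m} \<times> {..<N-1}) {m*N+1..m*N+m*(N-1)}"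
    using rev_bij[of "m*N" m "N-1"] by (rule bij_betw_cong[THEN iffD1, rotated]) (simp only: comp_def case_prod_beta lab_EA)
  show ?thesis unfolding 1 by (rule bij_betw_comp_image[OF 2])
qed

lemma bij_EB: "bij_betw (lab m N) (Inr ` EB m N) {m*N+m*(N-1)+1..m*N+m*(N-1)+m*(N-2)}"
proof -
  have 1: "Inr ` EB m N = (Inr \<circ> (\<lambda>(j,p). {(j, w p), (j, w (Suc (Suc p)))})) ` ({..<m} \<times> {..<N-2})"
    unfolding EB_def image_comp ..
  have 2: "bij_betw (lab m N \<circ> (Inr \<circ> (\<lambda>(j,p). {(j, w p), (j, w (Suc (Suc p)))}))) ({..<m} \<times> {..<N-2}) {m*N+m*(N-1)+1..m*N+m*(N-1)+m*(N-2)}"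
    using rev_bij[of "m*N+m*(N-1)" m "N-2"] by (rule bij_betw_cong[THEN iffD1, rotated]) (simp only: comp_def case_prod_beta lab_EB)
  show ?thesis unfolding 1 by (rule bij_betw_comp_image[OF 2])
qed



definition near :: "nat \<Rightarrow> nat \<Rightarrow> bool" where
  "near p q \<longleftrightarrow> q = Suc p \<or> q = Suc (Suc p) \<or> p = Suc q \<or> p = Suc (Suc q)"

lemma near_sym: "near p q \<Longrightarrow> near q p" unfolding near_def by auto

lemma edge_form: assumes "e \<in> EA m N \<union> EB m N"
  shows "\<exists>j p q. e = {(j, w p), (j, w q)} \<and> j < m \<and> p < N \<and> q < N \<and> near p q"
proof -
  from assms consider (a) j p where "e = {(j, w p), (j, w (Suc p))}" "j < m" "p < N - 1"
      | (b) j p where "e = {(j, w p), (j, w (Suc (Suc p)))}" "j < m" "p < N - 2"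
      unfolding EA_def EB_def by auto
  then show ?thesis
  proof cases
    case a
    then have "e = {(j, w p), (j, w (Suc p))} \<and> j < m \<and> p < N \<and> Suc p < N \<and> near p (Suc p)"
      by (auto simp: near_def)
    then show ?thesis by blast
  next
    case b
    then have "e = {(j, w p), (j, w (Suc (Suc p)))} \<and> j < m \<and> p < N \<and> Suc (Suc p) < N \<and> near p (Suc (Suc p))"
      by (auto simp: near_def)
    then show ?thesis by blast
  qed
qed

lemma adj: assumes "{x, y} \<in> EA m N \<union> EB m N" "x \<noteq> y"
  shows "\<exists>j p q. x = (j, w p) \<and> y = (j, w q) \<and> j < m \<and> p < N \<and> q < N \<and> near p q"
proof -
  obtain j p q where h: "{x, y} = {(j, w p), (j, w q)}" "j < m" "p < N" "q < N" "near p q"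
    using edge_form[OF assms(1)] by blast
  from h(1) have "(x = (j, w p) \<and> y = (j, w q)) \<or> (x = (j, w q) \<and> y = (j, w p))"
    by (simp add: doubleton_eq_iff)
  then show ?thesis
  proof
    assume "x = (j, w p) \<and> y = (j, w q)"
    then show ?thesis using h by blast
  next
    assume "x = (j, w q) \<and> y = (j, w p)"
    then show ?thesis using h near_sym by blast
  qed
qed

lemma near3: "near x y \<Longrightarrow> near x z \<Longrightarrow> x < y \<Longrightarrow> y < z \<Longrightarrow> y = Suc x \<and> z = Suc (Suc x)"
  unfolding near_def by auto

lemma tri_pos:
  fixes pa pb pc :: nat
  assumes "near pa pb" "near pa pc" "near pb pc" "pa \<noteq> pb" "pa \<noteq> pc" "pb \<noteq> pc"
  shows "\<exists>p. pa + pb + pc = 3*p + 3 \<and> pa \<le> Suc (Suc p) \<and> pb \<le> Suc (Suc p) \<and> pc \<le> Suc (Suc p)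
     \<and> (pa = Suc (Suc p) \<or> pb = Suc (Suc p) \<or> pc = Suc (Suc p))
     \<and> (\<forall>F :: nat \<Rightarrow> nat. F (pa+pb) + F (pa+pc) + F (pb+pc) =
           F (p + Suc p) + F (p + Suc (Suc p)) + F (Suc p + Suc (Suc p)))"
proof -
  have n: "near pb pa" "near pc pa" "near pc pb" using assms near_sym by auto
  have "\<exists>p. (pa = p \<and> pb = Suc p \<and> pc = Suc (Suc p)) \<or> (pa = p \<and> pc = Suc p \<and> pb = Suc (Suc p)) \<or>
          (pb = p \<and> pa = Suc p \<and> pc = Suc (Suc p)) \<or> (pb = p \<and> pc = Suc p \<and> pa = Suc (Suc p)) \<or>
          (pc = p \<and> pa = Suc p \<and> pb = Suc (Suc p)) \<or> (pc = p \<and> pb = Suc p \<and> pa = Suc (Suc p))"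
  proof (cases "pa < pb")
    case T1: True
    show ?thesis
    proof (cases "pb < pc")
      case True then show ?thesis using near3[OF assms(1,2) T1 True] by blast
    next
      case False
      then have "pc < pb" using assms by auto
      then show ?thesis
      proof (cases "pa < pc")
        case True then show ?thesis using near3[OF assms(2,1) True \<open>pc < pb\<close>] by blast
      next
        case False
        then have "pc < pa" using assms by auto
        then show ?thesis using near3[OF n(2,3) \<open>pc < pa\<close> T1] by blast
      qed
    qed
  next
    case False
    then have T1: "pb < pa" using assms by auto
    show ?thesis
    proof (cases "pa < pc")
      case True then show ?thesis using near3[OF n(1) assms(3) T1 True] by blast
    next
      case False
      then have "pc < pa" using assms by auto
      then show ?thesis
      proof (cases "pb < pc")
        case True then show ?thesis using near3[OF assms(3) n(1) True \<open>pc < pa\<close>] by blast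
      next
        case False
        then have "pc < pb" using assms by auto
        then show ?thesis using near3[OF n(3,2) \<open>pc < pb\<close> T1] by blast
      qed
    qed
  qed
  then obtain p where "(pa = p \<and> pb = Suc p \<and> pc = Suc (Suc p)) \<or> (pa = p \<and> pc = Suc p \<and> pb = Suc (Suc p)) \<or>
          (pb = p \<and> pa = Suc p \<and> pc = Suc (Suc p)) \<or> (pb = p \<and> pc = Suc p \<and> pa = Suc (Suc p)) \<or>
          (pc = p \<and> pa = Suc p \<and> pb = Suc (Suc p)) \<or> (pc = p \<and> pb = Suc p \<and> pa = Suc (Suc p))" by blast
  then show ?thesis
    by (intro exI[of _ p]) (elim disjE; simp add: ac_simps)
qed

definition magic_c :: "nat \<Rightarrow> nat \<Rightarrow> nat" where
  "magic_c m N = 3 + 2*m + 3*(m*N) + 3*(m*(N-1)) + m*(N-2)"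

lemma magic_arith:
  fixes m N j p :: nat
  assumes "Suc (Suc p) < N" "j < m"
  shows "3 + m*(3*p+3) + 3*j + ((m*N + m*(N-1) - (m*p+j)) + (m*N + m*(N-1) + m*(N-2) - (m*p+j))
          + (m*N + m*(N-1) - (m*Suc p+j))) = magic_c m N"
proof -
  have "m*(p+2) \<le> m*(N-1)" using assms by (intro mult_le_mono2) simp
  then have h: "m*p + 2*m \<le> m*(N-1)" by (simp add: algebra_simps)
  have e1: "m*Suc p = m*p + m" by simp
  have e2: "m*(3*p+3) = 3*(m*p) + 3*m" by (simp add: algebra_simps)
  show ?thesis unfolding magic_c_def e1 e2 using h assms(2) by linarith
qed



lemma C3_V: "fst (cycle_graph 3) = {0,1,2}"
  by (auto simp: cycle_graph_def)

lemma C3_E: "snd (cycle_graph 3) = {{0,1},{1,2},{0,2}}"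
proof -
  have "{{i, (i + 1) mod 3} | i::nat. i < 3} = (\<lambda>i. {i, (i + 1) mod 3}) ` {i. i < 3}" by blast
  also have "{i::nat. i < 3} = {0,1,2}" by auto
  also have "(\<lambda>i::nat. {i, (i + 1) mod 3}) ` {0,1,2} = {{0,1},{1,2},{2,0}}" by (simp add: numeral_2_eq_2)
  also have "{2::nat, 0} = {0, 2}" by auto
  finally show ?thesis by (simp add: cycle_graph_def)
qed

lemma C3_pair: "(x::nat) \<noteq> y \<Longrightarrow> x \<in> {0,1,2} \<Longrightarrow> y \<in> {0,1,2} \<Longrightarrow> {x, y} \<in> snd (cycle_graph 3)"
  unfolding C3_E by (auto simp: doubleton_eq_iff)

definition tri :: "nat \<Rightarrow> nat \<Rightarrow> (nat \<times> (bool \<times> nat)) graph" where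
  "tri j p = ({(j, w p), (j, w (Suc p)), (j, w (Suc (Suc p)))},
              {{(j, w p), (j, w (Suc p))}, {(j, w (Suc p)), (j, w (Suc (Suc p)))}, {(j, w p), (j, w (Suc (Suc p)))}})"

lemma tri_sub:
  assumes "j < m" "Suc (Suc p) < N"
  shows "subgraph (tri j p) (Vs m N, EA m N \<union> EB m N)"
proof -
  have v: "(j, w q) \<in> Vs m N" if "q < N" for q
    unfolding Vs_def using assms that by (intro image_eqI[of _ _ "(j,q)"]) auto
  have ea: "{(j, w q), (j, w (Suc q))} \<in> EA m N" if "Suc q < N" for q
    unfolding EA_def using assms that by (intro image_eqI[of _ _ "(j,q)"]) auto
  have eb: "{(j, w p), (j, w (Suc (Suc p)))} \<in> EB m N"
    unfolding EB_def using assms by (intro image_eqI[of _ _ "(j,p)"]) auto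
  show ?thesis unfolding subgraph_def tri_def fst_conv snd_conv
    using v[of p] v[of "Suc p"] v[of "Suc (Suc p)"] ea[of p] ea[of "Suc p"] eb assms by auto
qed

lemma iso3:
  fixes f :: "'a \<Rightarrow> nat"
  assumes "A \<noteq> B" "A \<noteq> C" "B \<noteq> C" "f A = 0" "f B = 1" "f C = 2"
  shows "\<forall>u\<in>{A,B,C}. \<forall>v\<in>{A,B,C}. {u,v} \<in> {{A,B},{B,C},{A,C}} \<longleftrightarrow> {f u, f v} \<in> {{0,1},{1,2},{0,2}}"
  using assms by (simp add: doubleton_eq_iff)

lemma tri_iso: "graph_iso (tri j p) (cycle_graph 3)"
proof -
  define f where "f x = pos (snd x) - p" for x :: "nat \<times> (bool \<times> nat)"
  have f: "f (j, w p) = 0" "f (j, w (Suc p)) = 1" "f (j, w (Suc (Suc p))) = 2"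
    by (simp_all add: f_def)
  have d: "(j, w p) \<noteq> (j, w (Suc p))" "(j, w p) \<noteq> (j, w (Suc (Suc p)))" "(j, w (Suc p)) \<noteq> (j, w (Suc (Suc p)))"
    by simp_all
  have b: "bij_betw f {(j, w p), (j, w (Suc p)), (j, w (Suc (Suc p)))} {0,1,2}"
  proof (rule bij_betw_imageI)
    show "inj_on f {(j, w p), (j, w (Suc p)), (j, w (Suc (Suc p)))}"
      unfolding inj_on_def using f by auto
    show "f ` {(j, w p), (j, w (Suc p)), (j, w (Suc (Suc p)))} = {0,1,2}"
      using f by simp
  qed
  show ?thesis unfolding graph_iso_def C3_V C3_E tri_def fst_conv snd_conv
    using b iso3[OF d f] by blast
qed



lemma pair3: "x \<in> {a,b,c} \<Longrightarrow> y \<in> {a,b,c} \<Longrightarrow> x \<noteq> y \<Longrightarrow> {x,y} \<in> {{a,b},{a,c},{b,c}}"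
  by (auto simp: doubleton_eq_iff)

lemma tri_sum:
  assumes sub: "subgraph G' (Vs m N, EA m N \<union> EB m N)" and iso: "graph_iso G' (cycle_graph 3)"
  shows "(\<Sum>v\<in>fst G'. lab m N (Inl v)) + (\<Sum>e\<in>snd G'. lab m N (Inr e)) = magic_c m N"
proof -
  obtain f where fb: "bij_betw f (fst G') (fst (cycle_graph 3))"
    and fe: "\<forall>u\<in>fst G'. \<forall>v\<in>fst G'. {u, v} \<in> snd G' \<longleftrightarrow> {f u, f v} \<in> snd (cycle_graph 3)"
    using iso unfolding graph_iso_def by blast
  have "card (fst G') = 3" using bij_betw_same_card[OF fb] by (simp add: C3_V)
  then obtain a b c where abc: "fst G' = {a,b,c}" "a \<noteq> b" "b \<noteq> c" "a \<noteq> c"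
    unfolding card_3_iff by blast
  have edge: "{x, y} \<in> snd G'" if "x \<in> fst G'" "y \<in> fst G'" "x \<noteq> y" for x y
  proof -
    have inj: "inj_on f (fst G')" using bij_betw_imp_inj_on[OF fb] .
    have im: "f ` fst G' = {0,1,2}" using bij_betw_imp_surj_on[OF fb] unfolding C3_V .
    have "f x \<noteq> f y" using inj_onD[OF inj _ that(1,2)] that(3) by auto
    moreover have "f x \<in> {0,1,2}" "f y \<in> {0,1,2}" using that(1,2) im by blast+
    ultimately have "{f x, f y} \<in> snd (cycle_graph 3)" by (rule C3_pair)
    then show ?thesis using fe that(1,2) by blast
  qed
  have ab: "{a,b} \<in> snd G'" and ac: "{a,c} \<in> snd G'" and bc: "{b,c} \<in> snd G'"
    using edge abc by auto
  have sG: "snd G' \<subseteq> EA m N \<union> EB m N" using sub unfolding subgraph_def by simp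
  obtain j pa pb where h1: "a = (j, w pa)" "b = (j, w pb)" "j < m" "pa < N" "pb < N" "near pa pb"
    using adj[of a b m N] ab sG abc by blast
  obtain j' pa' pc where h2: "a = (j', w pa')" "c = (j', w pc)" "pc < N" "near pa' pc"
    using adj[of a c m N] ac sG abc by blast
  obtain j'' pb' pc' where h3: "b = (j'', w pb')" "c = (j'', w pc')" "near pb' pc'"
    using adj[of b c m N] bc sG abc by blast
  have eqs: "j' = j" "pa' = pa" "j'' = j" "pb' = pb" "pc' = pc" using h1 h2 h3 by auto
  have d: "pa \<noteq> pb" "pa \<noteq> pc" "pb \<noteq> pc" using abc h1 h2 eqs by auto
  obtain p where p: "pa + pb + pc = 3*p + 3" "pa \<le> Suc (Suc p)" "pb \<le> Suc (Suc p)" "pc \<le> Suc (Suc p)"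
    "pa = Suc (Suc p) \<or> pb = Suc (Suc p) \<or> pc = Suc (Suc p)"
    and F: "\<And>F :: nat \<Rightarrow> nat. F (pa+pb) + F (pa+pc) + F (pb+pc) =
           F (p + Suc p) + F (p + Suc (Suc p)) + F (Suc p + Suc (Suc p))"
    using tri_pos[of pa pb pc] h1 h2 h3 eqs d by auto
  have pN: "Suc (Suc p) < N" using p(5) h1 h2 by auto
  have sE: "snd G' = {{a,b},{a,c},{b,c}}"
  proof
    show "{{a,b},{a,c},{b,c}} \<subseteq> snd G'" using ab ac bc by auto
    show "snd G' \<subseteq> {{a,b},{a,c},{b,c}}"
    proof
      fix e assume e: "e \<in> snd G'"
      then obtain j0 q r where er: "e = {(j0, w q), (j0, w r)}" "near q r"
        using edge_form[of e m N] sG by blast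
      have "q \<noteq> r" using er(2) unfolding near_def by auto
      moreover have "e \<subseteq> {a,b,c}" using sub e abc unfolding subgraph_def by auto
      ultimately show "e \<in> {{a,b},{a,c},{b,c}}" using er(1) pair3[of "(j0, w q)" a b c "(j0, w r)"] by simp
    qed
  qed
  have vsum: "(\<Sum>v\<in>fst G'. lab m N (Inl v)) = 3 + m*(3*p+3) + 3*j"
  proof -
    have "(\<Sum>v\<in>fst G'. lab m N (Inl v)) = lab m N (Inl a) + lab m N (Inl b) + lab m N (Inl c)"
      using abc by simp
    also have "\<dots> = 3 + m*(pa+pb+pc) + 3*j" using h1 h2 eqs by (simp add: algebra_simps)
    finally show ?thesis using p(1) by simp
  qed
  have esum: "(\<Sum>e\<in>snd G'. lab m N (Inr e)) =
      Elab m N j (pa+pb) + Elab m N j (pa+pc) + Elab m N j (pb+pc)"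
  proof -
    have "{a,b} \<noteq> {a,c}" "{a,b} \<noteq> {b,c}" "{a,c} \<noteq> {b,c}" using abc by (auto simp: doubleton_eq_iff)
    then have "(\<Sum>e\<in>snd G'. lab m N (Inr e)) = lab m N (Inr {a,b}) + lab m N (Inr {a,c}) + lab m N (Inr {b,c})"
      unfolding sE by (simp add: add.assoc)
    also have "\<dots> = Elab m N j (pa+pb) + Elab m N j (pa+pc) + Elab m N j (pb+pc)"
      using h1 h2 eqs d by (simp add: lab_edge)
    finally show ?thesis .
  qed
  have "Elab m N j (pa+pb) + Elab m N j (pa+pc) + Elab m N j (pb+pc)
      = Elab m N j (p + Suc p) + Elab m N j (p + Suc (Suc p)) + Elab m N j (Suc p + Suc (Suc p))"
    by (rule F)
  also have "\<dots> = (m*N + m*(N-1) - (m*p+j)) + (m*N + m*(N-1) + m*(N-2) - (m*p+j))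
          + (m*N + m*(N-1) - (m*Suc p+j))"
    by (simp only: Elab_a Elab_b)
  finally show ?thesis using vsum esum magic_arith[OF pN h1(3)] by simp
qed

lemma covering:
  assumes "4 \<le> N"
  shows "H_covering (cycle_graph 3) (Vs m N, EA m N \<union> EB m N)"
  unfolding H_covering_def
proof
  fix e assume "e \<in> snd (Vs m N, EA m N \<union> EB m N)"
  then consider (a) j p where "e = {(j, w p), (j, w (Suc p))}" "j < m" "p < N - 1"
      | (b) j p where "e = {(j, w p), (j, w (Suc (Suc p)))}" "j < m" "p < N - 2"
      unfolding EA_def EB_def by auto
  then show "\<exists>G'. subgraph G' (Vs m N, EA m N \<union> EB m N) \<and> graph_iso G' (cycle_graph 3) \<and> e \<in> snd G'"
  proof cases
    case a
    show ?thesis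
    proof (cases "Suc (Suc p) < N")
      case True
      then show ?thesis using a tri_sub tri_iso
        by (intro exI[of _ "tri j p"]) (auto simp: tri_def)
    next
      case False
      then obtain q where q: "p = Suc q" using a assms by (cases p) auto
      have "Suc (Suc q) < N" using a q by auto
      then show ?thesis using a tri_sub tri_iso q
        by (intro exI[of _ "tri j q"]) (auto simp: tri_def)
    qed
  next
    case b
    then show ?thesis using tri_sub tri_iso
      by (intro exI[of _ "tri j p"]) (auto simp: tri_def)
  qed
qed

theorem theorem4:
  fixes m n :: nat
  assumes "m \<ge> 2" and "n \<ge> 3"
  shows "H_supermagic (cycle_graph 3) (copies m (triangular_ladder n))"
proof -
  define N where "N = 2*n"
  have G: "copies m (triangular_ladder n) = (Vs m N, EA m N \<union> EB m N)"
    using copies_V copies_E N_def by (metis prod.collapse)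
  have N4: "4 \<le> N" using assms N_def by simp
  have bE: "bij_betw (lab m N) (Inr ` EA m N \<union> Inr ` EB m N)
      ({m*N+1..m*N+m*(N-1)} \<union> {m*N+m*(N-1)+1..m*N+m*(N-1)+m*(N-2)})"
    by (rule bij_betw_combine[OF bij_EA bij_EB]) auto
  have bAll: "bij_betw (lab m N) (Inl ` Vs m N \<union> (Inr ` EA m N \<union> Inr ` EB m N))
      ({1..m*N} \<union> ({m*N+1..m*N+m*(N-1)} \<union> {m*N+m*(N-1)+1..m*N+m*(N-1)+m*(N-2)}))"
    by (rule bij_betw_combine[OF bij_V bE]) auto
  have cV: "card (Vs m N) = m*N"
  proof -
    have "card (Inl ` Vs m N :: ((nat \<times> (bool \<times> nat)) + (nat \<times> (bool \<times> nat)) set) set) = card (Vs m N)"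
      by (rule card_image) simp
    then show ?thesis using bij_betw_same_card[OF bij_V[of m N]] by simp
  qed
  have cE: "card (EA m N \<union> EB m N) = m*(N-1) + m*(N-2)"
  proof -
    have "card (Inr ` EA m N \<union> Inr ` EB m N :: ((nat \<times> (bool \<times> nat)) + (nat \<times> (bool \<times> nat)) set) set) = m*(N-1) + m*(N-2)"
      using bij_betw_same_card[OF bE] by (simp add: card_Un_disjoint)
    moreover have "(Inr ` EA m N \<union> Inr ` EB m N :: ((nat \<times> (bool \<times> nat)) + (nat \<times> (bool \<times> nat)) set) set) = Inr ` (EA m N \<union> EB m N)" by auto
    moreover have "card (Inr ` (EA m N \<union> EB m N) :: ((nat \<times> (bool \<times> nat)) + (nat \<times> (bool \<times> nat)) set) set) = card (EA m N \<union> EB m N)"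
      by (rule card_image) simp
    ultimately show ?thesis by simp
  qed
  have R: "{1..m*N} \<union> ({m*N+1..m*N+m*(N-1)} \<union> {m*N+m*(N-1)+1..m*N+m*(N-1)+m*(N-2)})
      = {1..m*N + (m*(N-1) + m*(N-2))}" by auto
  have D: "Inl ` Vs m N \<union> (Inr ` EA m N \<union> Inr ` EB m N) = Inl ` Vs m N \<union> Inr ` (EA m N \<union> EB m N)"
    by auto
  have lam: "H_supermagic_labeling (cycle_graph 3) (Vs m N, EA m N \<union> EB m N) (lab m N)"
    unfolding H_supermagic_labeling_def H_magic_labeling_def fst_conv snd_conv cV cE
  proof (intro conjI exI allI impI)
    show "bij_betw (lab m N) (Inl ` Vs m N \<union> Inr ` (EA m N \<union> EB m N)) {1..m*N + (m*(N-1) + m*(N-2))}"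
      using bAll unfolding R D .
    fix G' assume "subgraph G' (Vs m N, EA m N \<union> EB m N) \<and> graph_iso G' (cycle_graph 3)"
    then show "(\<Sum>v\<in>fst G'. lab m N (Inl v)) + (\<Sum>e\<in>snd G'. lab m N (Inr e)) = magic_c m N"
      using tri_sum by blast
  next
    show "lab m N ` Inl ` Vs m N = {1..m*N}" using bij_V unfolding bij_betw_def by blast
  qed
  show ?thesis unfolding G H_supermagic_def using covering[OF N4] lam by blast
qed


end
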